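(* Consider the two-stage robust problem $\min_{x\in\mathcal X}c_1x+\max_{u\in\mathcal U(x)}\min_{y\in\mathcal Y(x,u)}c_2y$ with decision-dependent uncertainty set $\mathcal U(x)=\{u\in\{0,1\}^{m_u}: Fu\le h,\ u\le x'\}$, where $x'\in\{0,1\}^{m_u}$ is a subvector of binary first-stage variables of $x$, and suppose the set $\mathcal U^0=\{u\in\{0,1\}^{m_u}: Fu\le h\}$ is downward closed (if $u^1\in\mathcal U^0$, $u^2\in\{0,1\}^{m_u}$ and $u^2\le u^1$ then $u^2\in\mathcal U^0$). Then this problem is equivalent to the decision-independent two-stage robust problem $\min_{x\in\mathcal X}c_1x+\max_{u\in\mathcal U^0}\min_{y\in\bar{\mathcal Y}(x,u)}c_2y$, where $\bar{\mathcal Y}(x,u)=\{y\in\mathbb Z^{m_y}_+\times\mathbb R^{n_y}_+: B_2y\ge d-B_1x-E(u\circ x')\}$; equivalently, with the recourse feasible set replaced by $\{(y,v)\in(\mathbb Z^{m_y}_+\times\mathbb R^{n_y}_+)\times\mathbb R^{m_u}_+: B_2y\ge d-B_1x-Ev,\ v\le x',\ v\le u,\ v\ge x'+u-\mathbf 1\}$.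
   Context: $\mathcal X=\{x\in\mathbb Z^{m_x}_+\times\mathbb R^{n_x}_+: Ax\ge b\}$ (containing the binary subvector $x'$), $\mathcal Y(x,u)=\{y\in\mathbb Z^{m_y}_+\times\mathbb R^{n_y}_+: B_2y\ge d-B_1x-Eu\}$. $a\circ b$ denotes the componentwise (Hadamard) product and $\mathbf 1$ the all-ones vector. The optimal value of an infeasible minimization (maximization) problem is $+\infty$ ($-\infty$). Two formulations are called equivalent if they have the same optimal value and any optimal first-stage solution of one is optimal for the other, and vice versa. *)

theory Defs
  imports Complex_Main "HOL-Library.Extended_Real"
begin

text \<open>Vectors are modelled as functions nat => real, with an explicit dimension;
  a vector of dimension n is zero outside the indices 0..<n.\<close>

definition dotp :: "nat \<Rightarrow> (nat \<Rightarrow> real) \<Rightarrow> (nat \<Rightarrow> real) \<Rightarrow> real" where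
  "dotp n c x = (\<Sum>j<n. c j * x j)"

definition matvec :: "nat \<Rightarrow> (nat \<Rightarrow> nat \<Rightarrow> real) \<Rightarrow> (nat \<Rightarrow> real) \<Rightarrow> nat \<Rightarrow> real" where
  "matvec n M x = (\<lambda>i. \<Sum>j<n. M i j * x j)"

definition mixed_orthant :: "nat \<Rightarrow> nat \<Rightarrow> (nat \<Rightarrow> real) set" where
  "mixed_orthant m n = {y. (\<forall>i<m. y i \<in> \<int>) \<and> (\<forall>i<m+n. 0 \<le> y i) \<and> (\<forall>i\<ge>m+n. y i = 0)}"

definition binvecs :: "nat \<Rightarrow> (nat \<Rightarrow> real) set" where
  "binvecs m = {u. (\<forall>i<m. u i \<in> {0,1}) \<and> (\<forall>i\<ge>m. u i = 0)}"

definition nonneg_vecs :: "nat \<Rightarrow> (nat \<Rightarrow> real) set" where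
  "nonneg_vecs m = {v. (\<forall>i<m. 0 \<le> v i) \<and> (\<forall>i\<ge>m. v i = 0)}"

definition Xset :: "nat \<Rightarrow> nat \<Rightarrow> nat \<Rightarrow> (nat \<Rightarrow> nat \<Rightarrow> real) \<Rightarrow> (nat \<Rightarrow> real) \<Rightarrow> (nat \<Rightarrow> real) set" where
  "Xset mx nx rA A b = {x \<in> mixed_orthant mx nx. \<forall>i<rA. matvec (mx+nx) A x i \<ge> b i}"

text \<open>The binary subvector x' of x, selected by the index map sel: x'_i = x_(sel i).\<close>
definition subvec :: "nat \<Rightarrow> (nat \<Rightarrow> nat) \<Rightarrow> (nat \<Rightarrow> real) \<Rightarrow> nat \<Rightarrow> real" where
  "subvec mu sel x = (\<lambda>i. if i < mu then x (sel i) else 0)"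

definition hadamard :: "(nat \<Rightarrow> real) \<Rightarrow> (nat \<Rightarrow> real) \<Rightarrow> nat \<Rightarrow> real" where
  "hadamard a b = (\<lambda>i. a i * b i)"

text \<open>Recourse set {y in Z^my_+ x R^ny_+ : B2 y >= d - B1 x - E w} (B-matrices have rB rows).
  Y(x,u) is recourse_set ... x u, and Ybar(x,u) is recourse_set ... x (u o x').\<close>
definition recourse_set ::
  "nat \<Rightarrow> nat \<Rightarrow> nat \<Rightarrow> nat \<Rightarrow> nat \<Rightarrow> nat \<Rightarrow>
   (nat \<Rightarrow> nat \<Rightarrow> real) \<Rightarrow> (nat \<Rightarrow> nat \<Rightarrow> real) \<Rightarrow> (nat \<Rightarrow> nat \<Rightarrow> real) \<Rightarrow> (nat \<Rightarrow> real) \<Rightarrow>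
   (nat \<Rightarrow> real) \<Rightarrow> (nat \<Rightarrow> real) \<Rightarrow> (nat \<Rightarrow> real) set" where
  "recourse_set mx nx my ny mu rB B1 B2 E d x w =
     {y \<in> mixed_orthant my ny.
        \<forall>i<rB. matvec (my+ny) B2 y i \<ge> d i - matvec (mx+nx) B1 x i - matvec mu E w i}"

definition recourse_set_lin ::
  "nat \<Rightarrow> nat \<Rightarrow> nat \<Rightarrow> nat \<Rightarrow> nat \<Rightarrow> nat \<Rightarrow> (nat \<Rightarrow> nat) \<Rightarrow>
   (nat \<Rightarrow> nat \<Rightarrow> real) \<Rightarrow> (nat \<Rightarrow> nat \<Rightarrow> real) \<Rightarrow> (nat \<Rightarrow> nat \<Rightarrow> real) \<Rightarrow> (nat \<Rightarrow> real) \<Rightarrow>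
   (nat \<Rightarrow> real) \<Rightarrow> (nat \<Rightarrow> real) \<Rightarrow> ((nat \<Rightarrow> real) \<times> (nat \<Rightarrow> real)) set" where
  "recourse_set_lin mx nx my ny mu rB sel B1 B2 E d x u =
     {(y, v). y \<in> mixed_orthant my ny \<and> v \<in> nonneg_vecs mu \<and>
        (\<forall>i<rB. matvec (my+ny) B2 y i \<ge> d i - matvec (mx+nx) B1 x i - matvec mu E v i) \<and>
        (\<forall>i<mu. v i \<le> subvec mu sel x i \<and> v i \<le> u i \<and> v i \<ge> subvec mu sel x i + u i - 1)}"

definition U0set :: "nat \<Rightarrow> nat \<Rightarrow> (nat \<Rightarrow> nat \<Rightarrow> real) \<Rightarrow> (nat \<Rightarrow> real) \<Rightarrow> (nat \<Rightarrow> real) set" where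
  "U0set mu rF F h = {u \<in> binvecs mu. \<forall>i<rF. matvec mu F u i \<le> h i}"

definition Uset :: "nat \<Rightarrow> nat \<Rightarrow> (nat \<Rightarrow> nat \<Rightarrow> real) \<Rightarrow> (nat \<Rightarrow> real) \<Rightarrow> (nat \<Rightarrow> nat) \<Rightarrow>
    (nat \<Rightarrow> real) \<Rightarrow> (nat \<Rightarrow> real) set" where
  "Uset mu rF F h sel x = {u \<in> U0set mu rF F h. \<forall>i<mu. u i \<le> subvec mu sel x i}"

definition downward_closed :: "nat \<Rightarrow> (nat \<Rightarrow> real) set \<Rightarrow> bool" where
  "downward_closed m S \<longleftrightarrow>
     (\<forall>u1\<in>S. \<forall>u2\<in>binvecs m. (\<forall>i<m. u2 i \<le> u1 i) \<longrightarrow> u2 \<in> S)"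

text \<open>Optimal values are taken in the extended reals: Inf {} = +infinity, Sup {} = -infinity,
  matching the convention for infeasible min/max problems.\<close>
definition opt_value :: "('a \<Rightarrow> ereal) \<Rightarrow> 'a set \<Rightarrow> ereal" where
  "opt_value f X = (INF x\<in>X. f x)"

definition is_optimal :: "('a \<Rightarrow> ereal) \<Rightarrow> 'a set \<Rightarrow> 'a \<Rightarrow> bool" where
  "is_optimal f X x \<longleftrightarrow> x \<in> X \<and> f x = opt_value f X"

definition equivalent_formulations :: "('a \<Rightarrow> ereal) \<Rightarrow> ('a \<Rightarrow> ereal) \<Rightarrow> 'a set \<Rightarrow> bool" where
  "equivalent_formulations f g X \<longleftrightarrow>
     opt_value f X = opt_value g X \<and> (\<forall>x. is_optimal f X x \<longleftrightarrow> is_optimal g X x)"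

end

theory Submission
  imports Defs
begin

lemma bin01: "(a::real) \<in> {0,1} \<Longrightarrow> b \<in> {0,1} \<Longrightarrow>
  a*b \<le> a \<and> a*b \<le> b \<and> a*b \<ge> a+b-1 \<and> a*b \<in> {0,1} \<and> a*b \<ge> 0 \<and> (a \<le> b \<longrightarrow> a*b = a)"
  by auto

lemma bin_forced: "(a::real) \<in> {0,1} \<Longrightarrow> b \<in> {0,1} \<Longrightarrow> v \<le> a \<Longrightarrow> v \<le> b \<Longrightarrow> v \<ge> a+b-1 \<Longrightarrow> v \<ge> 0 \<Longrightarrow> v = b*a"
  by auto

lemma had_in_U:
  assumes xb: "\<forall>i<mu. x (sel i) \<in> {0, 1::real}"
    and down: "downward_closed mu (U0set mu rF F h)"
    and u: "u \<in> U0set mu rF F h"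
  shows "hadamard u (subvec mu sel x) \<in> Uset mu rF F h sel x"
proof -
  have ub: "u \<in> binvecs mu" using u by (simp add: U0set_def)
  have hb: "hadamard u (subvec mu sel x) \<in> binvecs mu"
    unfolding binvecs_def
  proof (intro CollectI conjI allI impI)
    fix i assume i: "i < mu"
    then have "u i \<in> {0,1}" "x (sel i) \<in> {0,1}" using ub xb by (auto simp: binvecs_def)
    then show "hadamard u (subvec mu sel x) i \<in> {0,1}" using i by (auto simp: hadamard_def subvec_def)
  next
    fix i :: nat assume "i \<ge> mu"
    then show "hadamard u (subvec mu sel x) i = 0" using ub by (auto simp: binvecs_def hadamard_def subvec_def)
  qed
  have "\<forall>i<mu. hadamard u (subvec mu sel x) i \<le> u i"
  proof (intro allI impI)
    fix i assume i: "i < mu"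
    then have "u i \<in> {0,1}" "x (sel i) \<in> {0,1}" using ub xb by (auto simp: binvecs_def)
    then show "hadamard u (subvec mu sel x) i \<le> u i" using i bin01[of "u i" "x (sel i)"] by (simp add: hadamard_def subvec_def)
  qed
  then have "hadamard u (subvec mu sel x) \<in> U0set mu rF F h"
    using down u hb unfolding downward_closed_def by blast
  moreover have "\<forall>i<mu. hadamard u (subvec mu sel x) i \<le> subvec mu sel x i"
  proof (intro allI impI)
    fix i assume i: "i < mu"
    then have "u i \<in> {0,1}" "x (sel i) \<in> {0,1}" using ub xb by (auto simp: binvecs_def)
    then show "hadamard u (subvec mu sel x) i \<le> subvec mu sel x i" using i bin01[of "u i" "x (sel i)"] by (simp add: hadamard_def subvec_def)
  qed
  ultimately show ?thesis by (simp add: Uset_def)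
qed

lemma had_id:
  assumes xb: "\<forall>i<mu. x (sel i) \<in> {0, 1::real}"
    and u: "u \<in> Uset mu rF F h sel x"
  shows "hadamard u (subvec mu sel x) = u"
proof
  fix i
  have ub: "u \<in> binvecs mu" and le: "\<forall>i<mu. u i \<le> subvec mu sel x i"
    using u by (auto simp: Uset_def U0set_def)
  show "hadamard u (subvec mu sel x) i = u i"
  proof (cases "i < mu")
    case True
    then have "u i \<in> {0,1}" "x (sel i) \<in> {0,1}" "u i \<le> x (sel i)"
      using ub xb le[rule_format, OF True] by (auto simp: binvecs_def subvec_def)
    then show ?thesis using True bin01[of "u i" "x (sel i)"] by (simp add: hadamard_def subvec_def)
  next
    case False
    then show ?thesis using ub by (auto simp: binvecs_def hadamard_def subvec_def)
  qed
qed

lemma had_image: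
  assumes xb: "\<forall>i<mu. x (sel i) \<in> {0, 1::real}"
    and down: "downward_closed mu (U0set mu rF F h)"
  shows "(\<lambda>u. hadamard u (subvec mu sel x)) ` U0set mu rF F h = Uset mu rF F h sel x"
proof
  show "(\<lambda>u. hadamard u (subvec mu sel x)) ` U0set mu rF F h \<subseteq> Uset mu rF F h sel x"
    using had_in_U[where sel=sel and x=x, OF xb down] by blast
next
  show "Uset mu rF F h sel x \<subseteq> (\<lambda>u. hadamard u (subvec mu sel x)) ` U0set mu rF F h"
  proof
    fix u assume u: "u \<in> Uset mu rF F h sel x"
    then have "u \<in> U0set mu rF F h" by (simp add: Uset_def)
    moreover have "u = hadamard u (subvec mu sel x)" using had_id[OF xb u] by simp
    ultimately show "u \<in> (\<lambda>u. hadamard u (subvec mu sel x)) ` U0set mu rF F h" by blast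
  qed
qed

lemma v_forced:
  assumes xb: "\<forall>i<mu. x (sel i) \<in> {0, 1::real}"
    and ub: "u \<in> binvecs mu"
    and v: "v \<in> nonneg_vecs mu"
    and c: "\<forall>i<mu. v i \<le> subvec mu sel x i \<and> v i \<le> u i \<and> v i \<ge> subvec mu sel x i + u i - 1"
  shows "v = hadamard u (subvec mu sel x)"
proof
  fix i
  show "v i = hadamard u (subvec mu sel x) i"
  proof (cases "i < mu")
    case True
    then have "v i \<le> x (sel i)" "v i \<le> u i" "v i \<ge> x (sel i) + u i - 1" "v i \<ge> 0"
      "u i \<in> {0,1}" "x (sel i) \<in> {0,1}"
      using c v ub xb by (auto simp: subvec_def nonneg_vecs_def binvecs_def)
    then have "v i = u i * x (sel i)" using bin_forced[of "x (sel i)" "u i" "v i"] by blast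
    then show ?thesis using True by (simp add: hadamard_def subvec_def)
  next
    case False
    then show ?thesis using ub v by (auto simp: binvecs_def nonneg_vecs_def hadamard_def subvec_def)
  qed
qed

lemma lin_image:
  assumes xb: "\<forall>i<mu. x (sel i) \<in> {0, 1::real}"
    and ub: "u \<in> binvecs mu"
  shows "fst ` recourse_set_lin mx nx my ny mu rB sel B1 B2 E d x u
       = recourse_set mx nx my ny mu rB B1 B2 E d x (hadamard u (subvec mu sel x))"
proof
  show "fst ` recourse_set_lin mx nx my ny mu rB sel B1 B2 E d x u
       \<subseteq> recourse_set mx nx my ny mu rB B1 B2 E d x (hadamard u (subvec mu sel x))"
  proof
    fix y assume "y \<in> fst ` recourse_set_lin mx nx my ny mu rB sel B1 B2 E d x u"
    then obtain v where yv: "(y, v) \<in> recourse_set_lin mx nx my ny mu rB sel B1 B2 E d x u"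
      by force
    then have "v = hadamard u (subvec mu sel x)"
      using v_forced[where sel=sel and x=x and u=u and mu=mu, OF xb ub] by (auto simp: recourse_set_lin_def)
    then show "y \<in> recourse_set mx nx my ny mu rB B1 B2 E d x (hadamard u (subvec mu sel x))"
      using yv by (auto simp: recourse_set_lin_def recourse_set_def)
  qed
next
  show "recourse_set mx nx my ny mu rB B1 B2 E d x (hadamard u (subvec mu sel x))
      \<subseteq> fst ` recourse_set_lin mx nx my ny mu rB sel B1 B2 E d x u"
  proof
    fix y assume y: "y \<in> recourse_set mx nx my ny mu rB B1 B2 E d x (hadamard u (subvec mu sel x))"
    have pi: "u i \<in> {0,1} \<and> x (sel i) \<in> {0,1}" if "i < mu" for i
      using ub xb that by (auto simp: binvecs_def)
    have pj: "u i * x (sel i) \<le> u i \<and> u i * x (sel i) \<le> x (sel i) \<and>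
        u i * x (sel i) \<ge> x (sel i) + u i - 1 \<and> u i * x (sel i) \<ge> 0" if "i < mu" for i
      using pi[OF that] bin01[of "u i" "x (sel i)"] by (simp add: add.commute)
    have nn: "hadamard u (subvec mu sel x) \<in> nonneg_vecs mu"
      unfolding nonneg_vecs_def hadamard_def subvec_def using pj by simp
    have cc: "\<forall>i<mu. hadamard u (subvec mu sel x) i \<le> subvec mu sel x i \<and>
        hadamard u (subvec mu sel x) i \<le> u i \<and>
        hadamard u (subvec mu sel x) i \<ge> subvec mu sel x i + u i - 1"
      unfolding hadamard_def subvec_def using pj by simp
    have "(y, hadamard u (subvec mu sel x)) \<in> recourse_set_lin mx nx my ny mu rB sel B1 B2 E d x u"
      using y nn cc by (simp add: recourse_set_lin_def recourse_set_def)
    then show "y \<in> fst ` recourse_set_lin mx nx my ny mu rB sel B1 B2 E d x u"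
      by (metis fst_conv image_eqI)
  qed
qed

lemma equiv_cong:
  assumes "\<forall>x\<in>X. f x = g x"
  shows "equivalent_formulations f g X"
proof -
  have o: "opt_value f X = opt_value g X"
    unfolding opt_value_def using assms by (metis (mono_tags, lifting) image_cong)
  show ?thesis unfolding equivalent_formulations_def is_optimal_def using o assms by auto
qed

theorem proposition3:
  fixes mx nx my ny mu rA rB rF :: nat
    and A B1 B2 E F :: "nat \<Rightarrow> nat \<Rightarrow> real"
    and b d h c1 c2 :: "nat \<Rightarrow> real"
    and sel :: "nat \<Rightarrow> nat"
  assumes sel_range: "\<forall>i<mu. sel i < mx + nx"
    and sel_inj: "inj_on sel {..<mu}"
    and sel_binary: "\<forall>x\<in>Xset mx nx rA A b. \<forall>i<mu. x (sel i) \<in> {0, 1}"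
    and down: "downward_closed mu (U0set mu rF F h)"
  shows
    "equivalent_formulations
       (\<lambda>x. ereal (dotp (mx+nx) c1 x) +
          (SUP u\<in>Uset mu rF F h sel x.
             INF y\<in>recourse_set mx nx my ny mu rB B1 B2 E d x u. ereal (dotp (my+ny) c2 y)))
       (\<lambda>x. ereal (dotp (mx+nx) c1 x) +
          (SUP u\<in>U0set mu rF F h.
             INF y\<in>recourse_set mx nx my ny mu rB B1 B2 E d x (hadamard u (subvec mu sel x)).
               ereal (dotp (my+ny) c2 y)))
       (Xset mx nx rA A b)
   \<and> equivalent_formulations
       (\<lambda>x. ereal (dotp (mx+nx) c1 x) +
          (SUP u\<in>Uset mu rF F h sel x.
             INF y\<in>recourse_set mx nx my ny mu rB B1 B2 E d x u. ereal (dotp (my+ny) c2 y)))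
       (\<lambda>x. ereal (dotp (mx+nx) c1 x) +
          (SUP u\<in>U0set mu rF F h.
             INF yv\<in>recourse_set_lin mx nx my ny mu rB sel B1 B2 E d x u.
               ereal (dotp (my+ny) c2 (fst yv))))
       (Xset mx nx rA A b)"
proof -
  define G where "G x w = (INF y\<in>recourse_set mx nx my ny mu rB B1 B2 E d x w. ereal (dotp (my+ny) c2 y))" for x w
  have P1: "(SUP u\<in>Uset mu rF F h sel x. G x u) = (SUP u\<in>U0set mu rF F h. G x (hadamard u (subvec mu sel x)))"
    if x: "x \<in> Xset mx nx rA A b" for x
  proof -
    have xb: "\<forall>i<mu. x (sel i) \<in> {0, 1::real}" using sel_binary x by blast
    have "(SUP u\<in>U0set mu rF F h. G x (hadamard u (subvec mu sel x)))
        = Sup (G x ` ((\<lambda>u. hadamard u (subvec mu sel x)) ` U0set mu rF F h))"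
      by (simp add: image_comp o_def)
    also have "\<dots> = (SUP u\<in>Uset mu rF F h sel x. G x u)" using had_image[where sel=sel and x=x, OF xb down] by simp
    finally show ?thesis by simp
  qed
  have P2: "(INF yv\<in>recourse_set_lin mx nx my ny mu rB sel B1 B2 E d x u. ereal (dotp (my+ny) c2 (fst yv)))
      = G x (hadamard u (subvec mu sel x))"
    if x: "x \<in> Xset mx nx rA A b" and u: "u \<in> U0set mu rF F h" for x u
  proof -
    have xb: "\<forall>i<mu. x (sel i) \<in> {0, 1::real}" using sel_binary x by blast
    have ub: "u \<in> binvecs mu" using u by (simp add: U0set_def)
    have "(INF yv\<in>recourse_set_lin mx nx my ny mu rB sel B1 B2 E d x u. ereal (dotp (my+ny) c2 (fst yv)))
       = Inf ((\<lambda>y. ereal (dotp (my+ny) c2 y)) ` (fst ` recourse_set_lin mx nx my ny mu rB sel B1 B2 E d x u))"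
      by (simp add: image_comp o_def)
    also have "\<dots> = G x (hadamard u (subvec mu sel x))"
      unfolding G_def lin_image[where sel=sel and x=x and u=u and mu=mu, OF xb ub] ..
    finally show ?thesis .
  qed
  show ?thesis
  proof
    show "equivalent_formulations
       (\<lambda>x. ereal (dotp (mx+nx) c1 x) +
          (SUP u\<in>Uset mu rF F h sel x.
             INF y\<in>recourse_set mx nx my ny mu rB B1 B2 E d x u. ereal (dotp (my+ny) c2 y)))
       (\<lambda>x. ereal (dotp (mx+nx) c1 x) +
          (SUP u\<in>U0set mu rF F h.
             INF y\<in>recourse_set mx nx my ny mu rB B1 B2 E d x (hadamard u (subvec mu sel x)).
               ereal (dotp (my+ny) c2 y)))
       (Xset mx nx rA A b)"
      apply (rule equiv_cong)
      using P1 unfolding G_def by simp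
  next
    have P3: "(SUP u\<in>U0set mu rF F h.
             INF yv\<in>recourse_set_lin mx nx my ny mu rB sel B1 B2 E d x u.
               ereal (dotp (my+ny) c2 (fst yv))) = (SUP u\<in>Uset mu rF F h sel x. G x u)"
      if x: "x \<in> Xset mx nx rA A b" for x
      using P1[OF x] P2[OF x] by (metis (no_types, lifting) SUP_cong)
    show "equivalent_formulations
       (\<lambda>x. ereal (dotp (mx+nx) c1 x) +
          (SUP u\<in>Uset mu rF F h sel x.
             INF y\<in>recourse_set mx nx my ny mu rB B1 B2 E d x u. ereal (dotp (my+ny) c2 y)))
       (\<lambda>x. ereal (dotp (mx+nx) c1 x) +
          (SUP u\<in>U0set mu rF F h.
             INF yv\<in>recourse_set_lin mx nx my ny mu rB sel B1 B2 E d x u.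
               ereal (dotp (my+ny) c2 (fst yv))))
       (Xset mx nx rA A b)"
      apply (rule equiv_cong)
      using P3 unfolding G_def by simp
  qed
qed

end
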